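(* Fix $R>0$ and let $S:=\{x=(x',x_n): x'\in\mathbb{R}^{n-1},\ 0<x_n<2R\}$, $d(x):=\operatorname{dist}(x,\mathbb{R}^n\setminus S)$. Suppose that for some $\alpha\ge0$ and $s\ge1$ there is $C_0>0$ with $$\inf_{u\in C_c^\infty(S)\setminus\{0\}}\frac{\int_S\frac{|\nabla u|}{d^{s-1}}dx-(s-1)\int_S\frac{|u|}{d^s}dx}{\int_S\frac{|\nabla u|}{d^\alpha}dx}\ \ge\ C_0.$$ Then $\alpha=0$. *)

theory Defs
  imports "HOL-Analysis.Analysis"
begin

definition partial :: "'n::finite \<Rightarrow> (real^'n \<Rightarrow> real) \<Rightarrow> real^'n \<Rightarrow> real" where
  "partial i f x = deriv (\<lambda>t. f (x + t *\<^sub>R axis i 1)) 0"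

fun iter_partial :: "'n::finite list \<Rightarrow> (real^'n \<Rightarrow> real) \<Rightarrow> real^'n \<Rightarrow> real" where
  "iter_partial [] f = f"
| "iter_partial (i # is) f = partial i (iter_partial is f)"

definition smooth :: "(real^'n::finite \<Rightarrow> real) \<Rightarrow> bool" where
  "smooth f \<longleftrightarrow> (\<forall>is. continuous_on UNIV (iter_partial is f) \<and>
      (\<forall>x i. (\<lambda>t. iter_partial is f (x + t *\<^sub>R axis i 1)) differentiable (at 0)))"

definition tsupport :: "(real^'n::finite \<Rightarrow> real) \<Rightarrow> (real^'n) set" where
  "tsupport f = closure {x. f x \<noteq> 0}"

definition Cc_inf :: "(real^'n::finite) set \<Rightarrow> (real^'n \<Rightarrow> real) set" where
  "Cc_inf S = {f. smooth f \<and> compact (tsupport f) \<and> tsupport f \<subseteq> S}"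

definition grad :: "(real^'n::finite \<Rightarrow> real) \<Rightarrow> real^'n \<Rightarrow> real^'n" where
  "grad f x = (\<chi> i. partial i f x)"

text \<open>The slab S = {x : 0 < x_k < 2R}, k the distinguished (last) coordinate.\<close>
definition slab :: "'n::finite \<Rightarrow> real \<Rightarrow> (real^'n) set" where
  "slab k R = {x. 0 < x $ k \<and> x $ k < 2 * R}"

end

theory Submission
  imports Defs "HOL-Computational_Algebra.Polynomial"
begin
lemma integral_lborel_prod_basis:
  fixes f :: "'a::euclidean_space \<Rightarrow> real \<Rightarrow> real"
  assumes int: "\<And>b. b \<in> Basis \<Longrightarrow> integrable lborel (f b)"
  shows "integrable lborel (\<lambda>x::'a. \<Prod>b\<in>Basis. f b (x \<bullet> b))"
    "(\<integral>x. (\<Prod>b\<in>Basis. f b (x \<bullet> b)) \<partial>(lborel::'a measure)) = (\<Prod>b\<in>Basis. \<integral>x. f b x \<partial>lborel)"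
proof -
  interpret product_sigma_finite "\<lambda>_::'a. lborel::real measure" by standard
  have meas[measurable]: "\<And>b. b \<in> Basis \<Longrightarrow> f b \<in> borel_measurable borel"
    using int by (simp add: borel_measurable_integrable)
  have T: "(\<lambda>g. \<Sum>b\<in>Basis. g b *\<^sub>R b) \<in> measurable (\<Pi>\<^sub>M b\<in>Basis. lborel) (borel::'a measure)"
    by measurable
  have eq: "\<And>g. g \<in> space (\<Pi>\<^sub>M b\<in>Basis. lborel) \<Longrightarrow>
     (\<Prod>b\<in>Basis. f b ((\<Sum>c\<in>Basis. g c *\<^sub>R c) \<bullet> b)) = (\<Prod>b\<in>Basis. f b (g b))"
    by (intro prod.cong refl) (simp add: inner_sum_left inner_Basis if_distrib sum.delta cong: if_cong)
  have pi: "integrable (\<Pi>\<^sub>M b\<in>Basis. lborel) (\<lambda>g. \<Prod>b\<in>Basis. f b (g b))"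
    by (rule product_integrable_prod) (auto intro: int)
  have mp: "(\<lambda>x::'a. \<Prod>b\<in>Basis. f b (x \<bullet> b)) \<in> borel_measurable borel"
    by measurable
  show "integrable lborel (\<lambda>x::'a. \<Prod>b\<in>Basis. f b (x \<bullet> b))"
    apply (subst lborel_eq)
    apply (subst integrable_distr_eq[OF T])
     apply (simp add: mp)
    using pi by (subst Bochner_Integration.integrable_cong[OF refl eq]) auto
  show "(\<integral>x. (\<Prod>b\<in>Basis. f b (x \<bullet> b)) \<partial>(lborel::'a measure)) = (\<Prod>b\<in>Basis. \<integral>x. f b x \<partial>lborel)"
    apply (subst lborel_eq)
    apply (subst integral_distr[OF T])
     apply (simp add: mp)
    apply (subst Bochner_Integration.integral_cong[OF refl eq], assumption)
    by (rule product_integral_prod) (auto intro: int)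
qed

lemma Basis_vec_real: "(Basis :: (real^'n::finite) set) = range (\<lambda>i. axis i 1)"
  by (auto simp: Basis_vec_def)

lemma inj_axis1: "inj (\<lambda>i::'n::finite. axis i (1::real))"
  by (auto simp: inj_def axis_eq_axis)

lemma integral_vec_prod:
  fixes h :: "'n::finite \<Rightarrow> real \<Rightarrow> real"
  assumes int: "\<And>i. integrable lborel (h i)"
  shows "integrable lborel (\<lambda>x::real^'n. \<Prod>i\<in>UNIV. h i (x $ i))"
    "(\<integral>x. (\<Prod>i\<in>UNIV. h i (x $ i)) \<partial>(lborel::(real^'n) measure)) = (\<Prod>i\<in>UNIV. \<integral>t. h i t \<partial>lborel)"
proof -
  define f where "f b = h (axis_index b)" for b :: "real^'n"
  have e1: "(\<Prod>b\<in>Basis. f b (x \<bullet> b)) = (\<Prod>i\<in>UNIV. h i (x $ i))" for x :: "real^'n"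
    unfolding Basis_vec_real by (subst prod.reindex[OF inj_axis1]) (simp add: f_def cart_eq_inner_axis)
  have e2: "(\<Prod>b\<in>Basis. \<integral>t. f b t \<partial>lborel) = (\<Prod>i\<in>UNIV. \<integral>t. h i t \<partial>lborel)"
    unfolding Basis_vec_real by (subst prod.reindex[OF inj_axis1]) (simp add: f_def)
  have fi: "\<And>b. b \<in> (Basis :: (real^'n) set) \<Longrightarrow> integrable lborel (f b)"
    by (simp add: f_def int)
  show "integrable lborel (\<lambda>x::real^'n. \<Prod>i\<in>UNIV. h i (x $ i))"
    using integral_lborel_prod_basis(1)[of f, OF fi] by (simp add: e1)
  show "(\<integral>x. (\<Prod>i\<in>UNIV. h i (x $ i)) \<partial>(lborel::(real^'n) measure)) = (\<Prod>i\<in>UNIV. \<integral>t. h i t \<partial>lborel)"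
    using integral_lborel_prod_basis(2)[of f, OF fi] by (simp add: e1 e2)
qed

coinductive cinf :: "(real \<Rightarrow> real) \<Rightarrow> bool" where
  cinfI: "(\<And>x. (f has_real_derivative f' x) (at x)) \<Longrightarrow> cinf f' \<Longrightarrow> cinf f"

lemma cinf_D:
  assumes "cinf f"
  shows "(f has_real_derivative deriv f x) (at x)" "cinf (deriv f)"
proof -
  from assms obtain f' where d: "\<And>x. (f has_real_derivative f' x) (at x)" and c: "cinf f'"
    by (cases rule: cinf.cases) auto
  have "deriv f = f'" using d by (auto intro!: ext DERIV_imp_deriv)
  then show "(f has_real_derivative deriv f x) (at x)" "cinf (deriv f)" using d c by auto
qed

lemma cinf_cont: "cinf f \<Longrightarrow> continuous_on UNIV f"
  by (meson DERIV_isCont cinf_D(1) continuous_at_imp_continuous_on)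

lemma cinf_isCont: "cinf f \<Longrightarrow> isCont f x"
  by (meson DERIV_isCont cinf_D(1))

inductive_set gen :: "(real \<Rightarrow> real) set \<Rightarrow> (real \<Rightarrow> real) set" for B where
  base: "f \<in> B \<Longrightarrow> f \<in> gen B"
| const: "(\<lambda>x. c) \<in> gen B"
| add: "f \<in> gen B \<Longrightarrow> g \<in> gen B \<Longrightarrow> (\<lambda>x. f x + g x) \<in> gen B"
| mult: "f \<in> gen B \<Longrightarrow> g \<in> gen B \<Longrightarrow> (\<lambda>x. f x * g x) \<in> gen B"

lemma gen_deriv:
  assumes B: "\<forall>f\<in>B. \<exists>f'\<in>gen B. \<forall>x. (f has_real_derivative f' x) (at x)"
  assumes "f \<in> gen B"
  shows "\<exists>f'\<in>gen B. \<forall>x. (f has_real_derivative f' x) (at x)"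
  using assms(2)
proof induction
  case (base f) then show ?case using B by blast
next
  case (const c) then show ?case by (intro bexI[of _ "\<lambda>x. 0"]) (auto intro: gen.const)
next
  case (add f g)
  then obtain f' g' where "f' \<in> gen B" "g' \<in> gen B" "\<forall>x. (f has_real_derivative f' x) (at x)"
    "\<forall>x. (g has_real_derivative g' x) (at x)" by blast
  then show ?case by (intro bexI[of _ "\<lambda>x. f' x + g' x"]) (auto intro: gen.add derivative_intros)
next
  case (mult f g)
  then obtain f' g' where "f' \<in> gen B" "g' \<in> gen B" "\<forall>x. (f has_real_derivative f' x) (at x)"
    "\<forall>x. (g has_real_derivative g' x) (at x)" by blast
  then show ?case
    by (intro bexI[of _ "\<lambda>x. f' x * g x + f x * g' x"])
       (auto intro!: gen.add gen.mult mult intro: derivative_eq_intros)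
qed

lemma gen_cinf:
  assumes B: "\<forall>f\<in>B. \<exists>f'\<in>gen B. \<forall>x. (f has_real_derivative f' x) (at x)"
  assumes "f \<in> gen B"
  shows "cinf f"
  using assms(2)
proof (coinduction arbitrary: f rule: cinf.coinduct)
  case (cinf f)
  then obtain f' where "f' \<in> gen B" "\<forall>x. (f has_real_derivative f' x) (at x)"
    using gen_deriv[OF B] by blast
  then show ?case by blast
qed

lemma cinf_gen_self: "\<forall>f\<in>{f. cinf f}. \<exists>f'\<in>gen {f. cinf f}. \<forall>x. (f has_real_derivative f' x) (at x)"
  using cinf_D by (blast intro: gen.base)

lemma cinf_const: "cinf (\<lambda>x. c)"
  by (rule gen_cinf[OF cinf_gen_self]) (rule gen.const)

lemma cinf_add: "cinf f \<Longrightarrow> cinf g \<Longrightarrow> cinf (\<lambda>x. f x + g x)"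
  by (rule gen_cinf[OF cinf_gen_self]) (auto intro: gen.intros)

lemma cinf_mult: "cinf f \<Longrightarrow> cinf g \<Longrightarrow> cinf (\<lambda>x. f x * g x)"
  by (rule gen_cinf[OF cinf_gen_self]) (auto intro: gen.intros)

lemma cinf_inverse:
  assumes h: "cinf h" and nz: "\<And>x. h x \<noteq> 0"
  shows "cinf (\<lambda>x. inverse (h x))"
proof (rule gen_cinf[of "{f. cinf f} \<union> {\<lambda>x. inverse (h x)}"])
  let ?B = "{f. cinf f} \<union> {\<lambda>x. inverse (h x)}"
  show "\<forall>f\<in>?B. \<exists>f'\<in>gen ?B. \<forall>x. (f has_real_derivative f' x) (at x)"
  proof
    fix f assume "f \<in> ?B"
    then show "\<exists>f'\<in>gen ?B. \<forall>x. (f has_real_derivative f' x) (at x)"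
    proof
      assume "f \<in> {f. cinf f}"
      then show ?thesis using cinf_D[of f] by (blast intro: gen.base)
    next
      assume "f \<in> {\<lambda>x. inverse (h x)}"
      then have f: "f = (\<lambda>x. inverse (h x))" by simp
      have M: "(\<lambda>x. (- 1 * deriv h x) * inverse (h x) * inverse (h x)) \<in> gen ?B"
        using cinf_D(2)[OF h] by (intro gen.mult gen.const gen.base) auto
      have D: "\<forall>x. (f has_real_derivative (- 1 * deriv h x) * inverse (h x) * inverse (h x)) (at x)"
        unfolding f
        by (auto intro!: derivative_eq_intros cinf_D(1)[OF h] nz simp: power2_eq_square field_simps)
      show ?thesis apply (rule bexI[where x="\<lambda>x. - 1 * deriv h x * inverse (h x) * inverse (h x)"])
        using D M by auto
    qed
  qed
qed (auto intro: gen.base)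

lemma cinf_affine_gen:
  assumes "cinf f"
  shows "cinf (\<lambda>t. m * f (c * t + e))"
  using assms
proof (coinduction arbitrary: f m rule: cinf.coinduct)
  case (cinf f m)
  have "\<forall>x. ((\<lambda>t. m * f (c * t + e)) has_real_derivative (m * c) * deriv f (c * x + e)) (at x)"
    by (auto intro!: derivative_eq_intros DERIV_chain2[OF cinf_D(1)[OF cinf]] simp: field_simps)
  then show ?case using cinf_D(2)[OF cinf]
    apply -
    apply (rule exI[of _ "\<lambda>t. m * f (c * t + e)"], rule exI[of _ "\<lambda>x. m * c * deriv f (c * x + e)"])
    apply (intro conjI refl)
     apply simp
    apply (rule disjI1, rule exI[of _ "deriv f"], rule exI[of _ "m * c"])
    by simp
qed

lemma cinf_affine: "cinf f \<Longrightarrow> cinf (\<lambda>t. f (c * t + e))"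
  using cinf_affine_gen[of f 1 c e] by simp

lemma poly_exp_tendsto: "((\<lambda>y. poly p y * exp (- y)) \<longlongrightarrow> (0::real)) at_top"
proof -
  have "((\<lambda>y. \<Sum>i\<le>degree p. coeff p i * (y ^ i / exp y)) \<longlongrightarrow> (\<Sum>i\<le>degree p. coeff p i * 0)) at_top"
    by (intro tendsto_sum tendsto_mult tendsto_const tendsto_power_div_exp_0)
  moreover have "(\<lambda>y. \<Sum>i\<le>degree p. coeff p i * (y ^ i / exp y)) = (\<lambda>y. poly p y * exp (- y))"
    by (auto simp: poly_altdef sum_divide_distrib exp_minus divide_inverse[symmetric] intro!: ext sum.cong)
  ultimately show ?thesis by simp
qed

definition epx :: "real poly \<Rightarrow> real \<Rightarrow> real" where
  "epx p t = (if t > 0 then poly p (1/t) * exp (- (1/t)) else 0)"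

lemma epx_right_lim: "((\<lambda>t. poly p (1/t) * exp (- (1/t))) \<longlongrightarrow> 0) (at_right (0::real))"
proof -
  have "filterlim (\<lambda>t::real. 1/t) at_top (at_right 0)"
    using filterlim_inverse_at_top_right by (simp add: inverse_eq_divide)
  from filterlim_compose[OF poly_exp_tendsto this] show ?thesis by simp
qed

lemma epx_deriv:
  "(epx p has_real_derivative epx ([:0,0,1:] * (p - pderiv p)) x) (at x)"
proof -
  let ?q = "[:0,0,1:] * (p - pderiv p)"
  have formula: "((\<lambda>t. poly p (1/t) * exp (- (1/t))) has_real_derivative
      poly ?q (1/x) * exp (- (1/x))) (at x)" if "x \<noteq> 0" for x
    using that
    by (auto intro!: derivative_eq_intros DERIV_chain2[OF poly_DERIV] simp: poly_diff algebra_simps)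
  consider "x > 0" | "x < 0" | "x = 0" by linarith
  then show ?thesis
  proof cases
    case 1
    have e: "epx ?q x = poly ?q (1/x) * exp (-(1/x))" using 1 by (simp add: epx_def)
    show ?thesis unfolding e
      apply (rule has_field_derivative_transform_within_open[where S="{0<..}", OF formula])
      using 1 by (auto simp: epx_def)
  next
    case 2
    have "((\<lambda>t. 0) has_real_derivative 0) (at x)" by simp
    have e: "epx ?q x = 0" using 2 by (simp add: epx_def)
    show ?thesis unfolding e
      apply (rule has_field_derivative_transform_within_open[where S="{..<0}", OF \<open>((\<lambda>t. 0) has_real_derivative 0) (at x)\<close>])
      using 2 by (auto simp: epx_def)
  next
    case 3
    have r: "((\<lambda>y. (epx p y - epx p 0) / (y - 0)) \<longlongrightarrow> 0) (at_right 0)"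
    proof -
      have "((\<lambda>t. poly (p * [:0,1:]) (1/t) * exp (- (1/t))) \<longlongrightarrow> 0) (at_right (0::real))"
        by (rule epx_right_lim)
      moreover have "\<forall>\<^sub>F y in at_right 0. poly (p * [:0,1:]) (1/y) * exp (- (1/y)) = (epx p y - epx p 0) / (y - 0)"
        by (rule eventually_at_rightI[of 0 1]) (auto simp: epx_def)
      ultimately show ?thesis by (rule Lim_transform_eventually)
    qed
    have l: "((\<lambda>y. (epx p y - epx p 0) / (y - 0)) \<longlongrightarrow> 0) (at_left 0)"
    proof -
      have "\<forall>\<^sub>F y in at_left 0. 0 = (epx p y - epx p 0) / (y - (0::real))"
        by (rule eventually_at_leftI[of "-1"]) (auto simp: epx_def)
      then show ?thesis by (intro Lim_transform_eventually[OF tendsto_const])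
    qed
    have "((\<lambda>y. (epx p y - epx p 0) / (y - 0)) \<longlongrightarrow> 0) (at 0)"
      using r l by (simp add: filterlim_at_split)
    then show ?thesis using 3 by (simp add: has_field_derivative_iff epx_def)
  qed
qed

lemma cinf_epx: "cinf (epx p)"
proof -
  have "cinf g" if "\<exists>p. g = epx p" for g
    using that
  proof (coinduction arbitrary: g rule: cinf.coinduct)
    case (cinf g)
    then obtain p where g: "g = epx p" by blast
    show ?case using epx_deriv[of p] g by blast
  qed
  then show ?thesis by blast
qed

definition e0 :: "real \<Rightarrow> real" where "e0 = epx 1"

lemma e0_eq: "e0 t = (if t > 0 then exp (- (1/t)) else 0)"
  by (simp add: e0_def epx_def)

lemma e0_nonneg: "e0 t \<ge> 0" by (simp add: e0_eq)
lemma e0_pos: "t > 0 \<Longrightarrow> e0 t > 0" by (simp add: e0_eq)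

lemma e0_mono: "x \<le> y \<Longrightarrow> e0 x \<le> e0 y"
  by (auto simp: e0_eq divide_simps)

definition gs :: "real \<Rightarrow> real" where
  "gs t = e0 t * inverse (e0 t + e0 (1 - t))"

lemma den_pos: "e0 t + e0 (1 - t) > 0"
proof (cases "t > 0")
  case True then show ?thesis using e0_pos[of t] e0_nonneg[of "1-t"] by linarith
next
  case False then show ?thesis using e0_pos[of "1-t"] e0_nonneg[of t] by linarith
qed

lemma cinf_e0: "cinf e0" unfolding e0_def by (rule cinf_epx)

lemma cinf_gs: "cinf gs"
proof -
  have "cinf (\<lambda>t. e0 t + e0 (1 - t))"
    using cinf_add[OF cinf_e0 cinf_affine[OF cinf_e0, of "-1" 1]] by simp
  then have "cinf (\<lambda>t. inverse (e0 t + e0 (1 - t)))"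
    by (rule cinf_inverse) (use den_pos in \<open>auto simp: less_le\<close>)
  then show ?thesis unfolding gs_def[abs_def] by (rule cinf_mult[OF cinf_e0])
qed

lemma gs_0: "t \<le> 0 \<Longrightarrow> gs t = 0" by (simp add: gs_def e0_eq)
lemma gs_1: "t \<ge> 1 \<Longrightarrow> gs t = 1"
  using den_pos[of t] by (simp add: gs_def e0_eq)
lemma gs_nonneg: "gs t \<ge> 0" using den_pos[of t] e0_nonneg[of t] by (simp add: gs_def)
lemma gs_le1: "gs t \<le> 1" using den_pos[of t] e0_nonneg[of t] e0_nonneg[of "1-t"]
  by (simp add: gs_def field_simps)

lemma gs_mono: "x \<le> y \<Longrightarrow> gs x \<le> gs y"
proof -
  assume xy: "x \<le> y"
  have a: "e0 x \<le> e0 y" "e0 (1 - y) \<le> e0 (1 - x)" using xy by (auto intro: e0_mono)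
  have "e0 x * e0 (1 - y) \<le> e0 y * e0 (1 - x)"
    by (rule mult_mono) (use a e0_nonneg in auto)
  then have "e0 x * (e0 y + e0 (1 - y)) \<le> e0 y * (e0 x + e0 (1 - x))"
    by (simp add: algebra_simps)
  then show ?thesis using den_pos[of x] den_pos[of y]
    by (simp add: gs_def field_simps)
qed

definition dg :: "real \<Rightarrow> real" where "dg = deriv gs"

lemma gs_deriv: "(gs has_real_derivative dg x) (at x)"
  unfolding dg_def by (rule cinf_D(1)[OF cinf_gs])

lemma cinf_dg: "cinf dg" unfolding dg_def by (rule cinf_D(2)[OF cinf_gs])

lemma dg_nonneg: "dg x \<ge> 0"
  by (rule mono_on_imp_deriv_nonneg[OF _ gs_deriv, of UNIV]) (auto intro: mono_onI gs_mono)

lemma dg_0: "x \<le> 0 \<Longrightarrow> dg x = 0"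
  by (rule DERIV_local_min[OF gs_deriv, of 1]) (auto simp: gs_0 gs_nonneg)

lemma dg_1: "x \<ge> 1 \<Longrightarrow> dg x = 0"
  by (rule DERIV_local_max[OF gs_deriv, of 1]) (auto simp: gs_1 gs_le1)

lemma dg_cont: "continuous_on A dg"
  using cinf_cont[OF cinf_dg] continuous_on_subset by blast

lemma dg_integral: "(\<integral>t. dg t \<partial>lborel) = 1" "integrable lborel dg"
proof -
  have eq: "dg = (\<lambda>t. indicator {0..1} t *\<^sub>R dg t)"
    by (auto simp: fun_eq_iff indicator_def) (meson dg_0 dg_1 linear)+
  have "(\<integral>t. indicator {0..1} t *\<^sub>R dg t \<partial>lborel) = gs 1 - gs 0"
    by (rule integral_FTC_atLeastAtMost)
       (auto intro!: has_vector_derivative_at_within gs_deriv[unfolded has_real_derivative_iff_has_vector_derivative] dg_cont)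
  then show "(\<integral>t. dg t \<partial>lborel) = 1" by (subst eq) (simp add: gs_0 gs_1)
  show "integrable lborel dg"
    by (subst eq, rule borel_integrable_compact) (auto intro: dg_cont)
qed

lemma cinf_funpow: "cinf f \<Longrightarrow> cinf ((deriv ^^ m) f)"
  by (induction m) (auto intro: cinf_D(2))

lemma axis_comp: "(x + t *\<^sub>R axis j (1::real)) $ i = x $ i + (if i = j then t else 0)"
  by (simp add: axis_def)

lemma line_prod_deriv:
  fixes F :: "'n::finite \<Rightarrow> real \<Rightarrow> real"
  assumes "\<And>i. cinf (F i)"
  shows "((\<lambda>t. \<Prod>i\<in>UNIV. F i ((x + t *\<^sub>R axis j 1) $ i)) has_real_derivative
          (\<Prod>i\<in>UNIV. (if i = j then deriv (F i) else F i) (x $ i))) (at 0)"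
proof -
  have e1: "(\<Prod>i\<in>UNIV. F i ((x + t *\<^sub>R axis j 1) $ i)) = F j (x $ j + t) * (\<Prod>i\<in>UNIV-{j}. F i (x $ i))" for t
    by (subst prod.remove[of UNIV j]) (auto simp: axis_def intro!: prod.cong)
  have e2: "(\<Prod>i\<in>UNIV. (if i = j then deriv (F i) else F i) (x $ i)) = deriv (F j) (x $ j) * (\<Prod>i\<in>UNIV-{j}. F i (x $ i))"
    by (subst prod.remove[of UNIV j]) (auto intro!: prod.cong)
  have d: "((\<lambda>t. F j (x $ j + t)) has_real_derivative deriv (F j) (x $ j)) (at 0)"
  proof -
    have g: "((\<lambda>t. x $ j + t) has_real_derivative 1) (at 0)" by (auto intro!: derivative_eq_intros)
    from DERIV_chain2[where f="F j" and g="\<lambda>t. x $ j + t" and x=0, OF cinf_D(1)[OF assms[of j]] g] show ?thesis by simp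
  qed
  have "((\<lambda>t. F j (x $ j + t) * (\<Prod>i\<in>UNIV-{j}. F i (x $ i))) has_real_derivative
          deriv (F j) (x $ j) * (\<Prod>i\<in>UNIV-{j}. F i (x $ i))) (at 0)"
    by (rule DERIV_cmult_right[OF d])
  then show ?thesis by (simp only: e1 e2)
qed

lemma partial_prod:
  fixes F :: "'n::finite \<Rightarrow> real \<Rightarrow> real"
  assumes "\<And>i. cinf (F i)"
  shows "partial j (\<lambda>x. \<Prod>i\<in>UNIV. F i (x $ i)) x = (\<Prod>i\<in>UNIV. (if i = j then deriv (F i) else F i) (x $ i))"
  unfolding partial_def by (rule DERIV_imp_deriv[OF line_prod_deriv[OF assms]])

lemma iter_partial_prod:
  fixes H :: "'n::finite \<Rightarrow> real \<Rightarrow> real"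
  assumes H: "\<And>i. cinf (H i)"
  shows "iter_partial is (\<lambda>x. \<Prod>i\<in>UNIV. H i (x $ i)) = (\<lambda>x. \<Prod>i\<in>UNIV. (deriv ^^ count_list is i) (H i) (x $ i))"
proof (induction "is")
  case Nil then show ?case by simp
next
  case (Cons j "is")
  have c: "\<And>i. cinf ((deriv ^^ count_list is i) (H i))" by (rule cinf_funpow[OF H])
  show ?case
    by (auto simp: Cons partial_prod[OF c] intro!: ext prod.cong)
qed

lemma smooth_prod:
  fixes H :: "'n::finite \<Rightarrow> real \<Rightarrow> real"
  assumes H: "\<And>i. cinf (H i)"
  shows "smooth (\<lambda>x::real^'n. \<Prod>i\<in>UNIV. H i (x $ i))"
  unfolding smooth_def
proof (intro allI conjI)
  fix "is" :: "'n list"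
  have c: "\<And>i. cinf ((deriv ^^ count_list is i) (H i))" by (rule cinf_funpow[OF H])
  show "continuous_on UNIV (iter_partial is (\<lambda>x::real^'n. \<Prod>i\<in>UNIV. H i (x $ i)))"
    unfolding iter_partial_prod[OF H]
    by (intro continuous_intros continuous_on_compose2[OF cinf_cont[OF c]]) auto
  fix x :: "real^'n" and j
  show "(\<lambda>t. iter_partial is (\<lambda>x. \<Prod>i\<in>UNIV. H i (x $ i)) (x + t *\<^sub>R axis j 1)) differentiable at 0"
    unfolding iter_partial_prod[OF H]
    unfolding real_differentiable_def
    using line_prod_deriv[where x=x and j=j and F="\<lambda>i. (deriv ^^ count_list is i) (H i)", OF c] by blast
qed

lemma grad_prod:
  fixes H :: "'n::finite \<Rightarrow> real \<Rightarrow> real"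
  assumes H: "\<And>i. cinf (H i)"
  shows "grad (\<lambda>x. \<Prod>i\<in>UNIV. H i (x $ i)) x $ j = (\<Prod>i\<in>UNIV. (if i = j then deriv (H i) else H i) (x $ i))"
  by (simp add: grad_def partial_prod[OF H])

lemma integrable_cont_support:
  fixes f :: "real \<Rightarrow> real"
  assumes "continuous_on {lo..hi} f" "\<And>t. t \<notin> {lo..hi} \<Longrightarrow> f t = 0"
  shows "integrable lborel f"
proof -
  have "f = (\<lambda>t. indicator {lo..hi} t *\<^sub>R f t)" using assms(2) by (auto simp: fun_eq_iff indicator_def)
  then show ?thesis using borel_integrable_compact[OF compact_Icc assms(1)] by simp
qed

lemma dg_affine:
  assumes c: "c \<noteq> 0"
  shows "integrable lborel (\<lambda>t. dg (c * t + e))" "(\<integral>t. dg (c * t + e) \<partial>lborel) = 1 / \<bar>c\<bar>"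
proof -
  show "integrable lborel (\<lambda>t. dg (c * t + e))"
    using lborel_integrable_real_affine[OF dg_integral(2) c, of e] by (simp add: add.commute)
  have "(\<integral>t. dg t \<partial>lborel) = \<bar>c\<bar> *\<^sub>R (\<integral>x. dg (e + c * x) \<partial>lborel)"
    by (rule lborel_integral_real_affine[OF c])
  then show "(\<integral>t. dg (c * t + e) \<partial>lborel) = 1 / \<bar>c\<bar>"
    using c by (simp add: dg_integral(1) add.commute field_simps)
qed

lemma dg_zero_out: "t \<notin> {0..1} \<Longrightarrow> dg t = 0"
  by (auto intro: dg_0 dg_1)

locale cfg =
  fixes R a h L :: real
  assumes a: "0 < a" and h: "0 < h" and ah: "a + h < R" and L: "0 < L"
begin

definition psi :: "real \<Rightarrow> real" where
  "psi t = gs ((t - a) / h) * gs ((2 * R - a - t) / h)"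
definition dpsi :: "real \<Rightarrow> real" where
  "dpsi t = dg ((t - a) / h) / h * gs ((2 * R - a - t) / h) - gs ((t - a) / h) * (dg ((2 * R - a - t) / h) / h)"
definition Pl :: "real \<Rightarrow> real" where
  "Pl t = gs (t + L + 1) * gs (L + 1 - t)"
definition dPl :: "real \<Rightarrow> real" where
  "dPl t = dg (t + L + 1) * gs (L + 1 - t) - gs (t + L + 1) * dg (L + 1 - t)"
definition dk :: "real \<Rightarrow> real" where
  "dk t = min t (2 * R - t)"

lemma psi_deriv: "(psi has_real_derivative dpsi t) (at t)"
proof -
  have d1: "((\<lambda>t. gs ((t - a) / h)) has_real_derivative dg ((t - a) / h) * (1 / h)) (at t)"
    using h by (intro DERIV_chain2[OF gs_deriv]) (auto intro!: derivative_eq_intros)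
  have d2: "((\<lambda>t. gs ((2 * R - a - t) / h)) has_real_derivative dg ((2 * R - a - t) / h) * (- 1 / h)) (at t)"
    using h by (intro DERIV_chain2[OF gs_deriv]) (auto intro!: derivative_eq_intros simp: field_simps)
  show ?thesis unfolding psi_def[abs_def]
    by (rule DERIV_mult[OF d1 d2, THEN DERIV_cong]) (use h in \<open>simp add: dpsi_def field_simps\<close>)
qed

lemma deriv_psi: "deriv psi = dpsi"
  using psi_deriv by (auto intro!: ext DERIV_imp_deriv)

lemma Pl_deriv: "(Pl has_real_derivative dPl t) (at t)"
proof -
  have d1: "((\<lambda>t. gs (t + L + 1)) has_real_derivative dg (t + L + 1) * 1) (at t)"
    by (rule DERIV_chain2[OF gs_deriv]) (auto intro!: derivative_eq_intros)
  have d2: "((\<lambda>t. gs (L + 1 - t)) has_real_derivative dg (L + 1 - t) * (- 1)) (at t)"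
    by (rule DERIV_chain2[OF gs_deriv]) (auto intro!: derivative_eq_intros)
  show ?thesis unfolding Pl_def[abs_def]
    by (rule DERIV_mult[OF d1 d2, THEN DERIV_cong]) (simp add: dPl_def field_simps)
qed

lemma deriv_Pl: "deriv Pl = dPl"
  using Pl_deriv by (auto intro!: ext DERIV_imp_deriv)

lemma cinf_psi: "cinf psi"
proof -
  have e1: "(t - a) / h = (1/h) * t + (- a / h)" for t using h by (simp add: field_simps)
  have e2: "(2 * R - a - t) / h = (-1/h) * t + (2 * R - a) / h" for t using h by (simp add: field_simps)
  have "psi = (\<lambda>t. gs ((1/h) * t + (- a / h)) * gs ((-1/h) * t + (2 * R - a) / h))"
    unfolding psi_def[abs_def] e1 e2 ..
  moreover have "cinf (\<lambda>t. gs ((1/h) * t + (- a / h)) * gs ((-1/h) * t + (2 * R - a) / h))"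
    by (rule cinf_mult; rule cinf_affine[OF cinf_gs])
  ultimately show ?thesis by simp
qed

lemma cinf_Pl: "cinf Pl"
proof -
  have "Pl = (\<lambda>t. gs (1 * t + (L + 1)) * gs ((-1) * t + (L + 1)))"
    by (auto simp: Pl_def fun_eq_iff field_simps)
  moreover have "cinf (\<lambda>t. gs (1 * t + (L + 1)) * gs ((-1) * t + (L + 1)))"
    by (rule cinf_mult; rule cinf_affine[OF cinf_gs])
  ultimately show ?thesis by simp
qed

lemma cinf_dpsi: "cinf dpsi" using cinf_D(2)[OF cinf_psi] by (simp add: deriv_psi)
lemma cinf_dPl: "cinf dPl" using cinf_D(2)[OF cinf_Pl] by (simp add: deriv_Pl)

lemma psi_zero: "t \<le> a \<or> t \<ge> 2 * R - a \<Longrightarrow> psi t = 0"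
proof -
  assume "t \<le> a \<or> t \<ge> 2 * R - a"
  then have "(t - a) / h \<le> 0 \<or> (2 * R - a - t) / h \<le> 0" using h by (auto simp: divide_nonpos_pos)
  then show ?thesis by (auto simp: psi_def gs_0)
qed

lemma dpsi_zero: "t \<le> a \<or> t \<ge> 2 * R - a \<Longrightarrow> dpsi t = 0"
proof -
  assume "t \<le> a \<or> t \<ge> 2 * R - a"
  then have "(t - a) / h \<le> 0 \<or> (2 * R - a - t) / h \<le> 0" using h by (auto simp: divide_nonpos_pos)
  then show ?thesis by (auto simp: dpsi_def gs_0 dg_0)
qed

lemma psi_nonneg: "psi t \<ge> 0" by (simp add: psi_def gs_nonneg)
lemma psi_le1: "psi t \<le> 1" by (simp add: psi_def gs_nonneg gs_le1 mult_le_one)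

lemma psi_one: "a + h \<le> t \<Longrightarrow> t \<le> 2 * R - a - h \<Longrightarrow> psi t = 1"
proof -
  assume "a + h \<le> t" "t \<le> 2 * R - a - h"
  then have "(t - a) / h \<ge> 1" "(2 * R - a - t) / h \<ge> 1" using h by (auto simp: field_simps)
  then show ?thesis by (simp add: psi_def gs_1)
qed

lemma dpsi_left: "a \<le> t \<Longrightarrow> t \<le> a + h \<Longrightarrow> dpsi t = dg ((t - a) / h) / h"
proof -
  assume t: "a \<le> t" "t \<le> a + h"
  have "(2 * R - a - t) / h \<ge> 1" using t ah h by (simp add: field_simps)
  then show ?thesis by (simp add: dpsi_def gs_1 dg_1)
qed

lemma dpsi_abs: "\<bar>dpsi t\<bar> \<le> dg ((t - a) / h) / h + dg ((2 * R - a - t) / h) / h"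
proof -
  have "\<bar>dpsi t\<bar> \<le> \<bar>dg ((t - a) / h) / h * gs ((2 * R - a - t) / h)\<bar> + \<bar>gs ((t - a) / h) * (dg ((2 * R - a - t) / h) / h)\<bar>"
    unfolding dpsi_def by (rule abs_triangle_ineq4)
  also have "\<dots> \<le> dg ((t - a) / h) / h + dg ((2 * R - a - t) / h) / h"
  proof -
    have 1: "dg u / h * gs v \<le> dg u / h" for u v
      using h by (intro mult_right_le_one_le) (auto simp: dg_nonneg gs_nonneg gs_le1)
    have 2: "gs v * (dg u / h) \<le> dg u / h" for u v
      using h by (intro mult_left_le_one_le) (auto simp: dg_nonneg gs_nonneg gs_le1)
    show ?thesis using h 1 2 by (intro add_mono) (auto simp: abs_mult dg_nonneg gs_nonneg abs_of_nonneg)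
  qed
  finally show ?thesis .
qed

lemma Pl_zero: "t \<le> -L - 1 \<or> t \<ge> L + 1 \<Longrightarrow> Pl t = 0"
  by (auto simp: Pl_def intro!: gs_0)

lemma dPl_zero: "t \<le> -L - 1 \<or> t \<ge> L + 1 \<Longrightarrow> dPl t = 0"
proof -
  assume "t \<le> -L - 1 \<or> t \<ge> L + 1"
  then have "t + L + 1 \<le> 0 \<or> L + 1 - t \<le> 0" by auto
  then show ?thesis by (auto simp: dPl_def gs_0 dg_0)
qed

lemma Pl_nonneg: "Pl t \<ge> 0" by (simp add: Pl_def gs_nonneg)

lemma Pl_one: "-L \<le> t \<Longrightarrow> t \<le> L \<Longrightarrow> Pl t = 1"
proof -
  assume "-L \<le> t" "t \<le> L"
  then have "t + L + 1 \<ge> 1" "L + 1 - t \<ge> 1" by auto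
  then show ?thesis by (simp add: Pl_def gs_1)
qed

lemma dPl_abs: "\<bar>dPl t\<bar> \<le> dg (t + L + 1) + dg (L + 1 - t)"
proof -
  have "\<bar>dPl t\<bar> \<le> \<bar>dg (t + L + 1) * gs (L + 1 - t)\<bar> + \<bar>gs (t + L + 1) * dg (L + 1 - t)\<bar>"
    unfolding dPl_def by (rule abs_triangle_ineq4)
  also have "\<dots> \<le> dg (t + L + 1) + dg (L + 1 - t)"
    using dg_nonneg gs_nonneg gs_le1
    by (intro add_mono) (auto simp: abs_mult intro!: mult_right_le_one_le mult_left_le_one_le)
  finally show ?thesis .
qed

end

context cfg
begin

lemma dk_ge: "a \<le> t \<Longrightarrow> t \<le> 2 * R - a \<Longrightarrow> a \<le> dk t"
  by (simp add: dk_def)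

lemma dk_nz: "a \<le> t \<Longrightarrow> t \<le> 2 * R - a \<Longrightarrow> dk t \<noteq> 0"
  using a by (simp add: dk_def)

lemma dk_cont: "continuous_on A dk"
  unfolding dk_def[abs_def] by (intro continuous_intros)

lemma dg_aff1: "integrable lborel (\<lambda>t. dg ((t - a) / h) / h)" "(\<integral>t. dg ((t - a) / h) / h \<partial>lborel) = 1"
proof -
  have e: "(t - a) / h = (1/h) * t + (- a / h)" for t using h by (simp add: field_simps)
  have c: "1/h \<noteq> 0" using h by simp
  show "integrable lborel (\<lambda>t. dg ((t - a) / h) / h)" unfolding e
    by (intro integrable_divide_zero dg_affine(1)[OF c])
  show "(\<integral>t. dg ((t - a) / h) / h \<partial>lborel) = 1" unfolding e
    using dg_affine(2)[OF c, of "- a / h"] h by simp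
qed

lemma dg_aff2: "integrable lborel (\<lambda>t. dg ((2 * R - a - t) / h) / h)" "(\<integral>t. dg ((2 * R - a - t) / h) / h \<partial>lborel) = 1"
proof -
  have e: "(2 * R - a - t) / h = (-1/h) * t + (2 * R - a) / h" for t using h by (simp add: field_simps)
  have c: "-1/h \<noteq> 0" using h by simp
  show "integrable lborel (\<lambda>t. dg ((2 * R - a - t) / h) / h)" unfolding e
    by (intro integrable_divide_zero dg_affine(1)[OF c])
  show "(\<integral>t. dg ((2 * R - a - t) / h) / h \<partial>lborel) = 1" unfolding e
    using dg_affine(2)[OF c, of "(2 * R - a) / h"] h by simp
qed

lemma dg_aff3: "integrable lborel (\<lambda>t. dg (t + L + 1))" "(\<integral>t. dg (t + L + 1) \<partial>lborel) = 1"
  using dg_affine[of 1 "L + 1"] by (simp_all add: add.assoc)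

lemma dg_aff4: "integrable lborel (\<lambda>t. dg (L + 1 - t))" "(\<integral>t. dg (L + 1 - t) \<partial>lborel) = 1"
  using dg_affine[of "-1" "L + 1"] by (simp_all add: add.commute)

lemma Pl_int: "integrable lborel Pl"
  by (rule integrable_cont_support[of "-L-1" "L+1"]) (auto intro: cinf_cont[OF cinf_Pl, THEN continuous_on_subset] Pl_zero)

lemma Pl_integral_ge: "(\<integral>t. Pl t \<partial>lborel) \<ge> 2 * L"
proof -
  have "(\<integral>t. indicator {-L..L} t \<partial>lborel) \<le> (\<integral>t. Pl t \<partial>lborel)"
    by (rule integral_mono'[OF Pl_int]) (auto simp: indicator_def Pl_one Pl_nonneg)
  moreover have "(\<integral>t. indicator {-L..L} t \<partial>lborel) = 2 * L"
    using L by (simp add: measure_def)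
  ultimately show ?thesis by simp
qed

lemma dPl_int: "integrable lborel (\<lambda>t. \<bar>dPl t\<bar>)"
  by (rule integrable_cont_support[of "-L-1" "L+1"])
     (auto intro!: continuous_intros intro: cinf_cont[OF cinf_dPl, THEN continuous_on_subset] dPl_zero)

lemma dPl_integral_le: "(\<integral>t. \<bar>dPl t\<bar> \<partial>lborel) \<le> 2"
proof -
  have "(\<integral>t. \<bar>dPl t\<bar> \<partial>lborel) \<le> (\<integral>t. dg (t + L + 1) + dg (L + 1 - t) \<partial>lborel)"
    by (rule integral_mono'[OF Bochner_Integration.integrable_add[OF dg_aff3(1) dg_aff4(1)]])
       (auto intro: dPl_abs add_nonneg_nonneg dg_nonneg)
  also have "\<dots> = 2" using dg_aff3 dg_aff4 by simp
  finally show ?thesis .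
qed

lemma psiw_int: "integrable lborel (\<lambda>t. \<bar>psi t\<bar> / dk t powr w)"
  by (rule integrable_cont_support[of "a" "2*R-a"])
     (auto intro!: continuous_intros intro: cinf_cont[OF cinf_psi, THEN continuous_on_subset]
       dk_cont psi_zero simp: dk_nz)

lemma dpsiw_int: "integrable lborel (\<lambda>t. \<bar>dpsi t\<bar> / dk t powr w)"
  by (rule integrable_cont_support[of "a" "2*R-a"])
     (auto intro!: continuous_intros intro: cinf_cont[OF cinf_dpsi, THEN continuous_on_subset]
       dk_cont dpsi_zero simp: dk_nz)

lemma dpsiw_le:
  assumes w: "w \<ge> 0"
  shows "(\<integral>t. \<bar>dpsi t\<bar> / dk t powr w \<partial>lborel) \<le> 2 / a powr w"
proof -
  have pt: "\<bar>dpsi t\<bar> / dk t powr w \<le> (dg ((t - a) / h) / h + dg ((2 * R - a - t) / h) / h) / a powr w" for t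
  proof (cases "a \<le> t \<and> t \<le> 2 * R - a")
    case True
    then have "a powr w \<le> dk t powr w" using dk_ge a w by (intro powr_mono2) auto
    moreover have "0 < a powr w" using a by simp
    ultimately show ?thesis using dpsi_abs[of t]
      by (intro frac_le) auto
  next
    case False
    then show ?thesis using dpsi_zero[of t] h by (auto intro!: divide_nonneg_nonneg add_nonneg_nonneg dg_nonneg)
  qed
  have "(\<integral>t. \<bar>dpsi t\<bar> / dk t powr w \<partial>lborel)
      \<le> (\<integral>t. (dg ((t - a) / h) / h + dg ((2 * R - a - t) / h) / h) / a powr w \<partial>lborel)"
    by (rule integral_mono'[OF integrable_divide[OF Bochner_Integration.integrable_add[OF dg_aff1(1) dg_aff2(1)]]])
       (use pt h in \<open>auto intro!: divide_nonneg_nonneg add_nonneg_nonneg dg_nonneg\<close>)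
  also have "\<dots> = 2 / a powr w"
    using dg_aff1 dg_aff2 by simp
  finally show ?thesis .
qed

lemma K_piece: "integrable lborel (\<lambda>t. dg ((t - a) / h) / h * c)" "(\<integral>t. dg ((t - a) / h) / h * c \<partial>lborel) = c"
proof -
  show "integrable lborel (\<lambda>t. dg ((t - a) / h) / h * c)" by (intro integrable_mult_left dg_aff1(1))
  have "(\<integral>t. dg ((t - a) / h) / h * c \<partial>lborel) = (\<integral>t. dg ((t - a) / h) / h \<partial>lborel) * c"
    by (rule Bochner_Integration.integral_mult_left) (rule dg_aff1(1))
  also have "\<dots> = 1 * c" by (simp only: dg_aff1(2))
  finally show "(\<integral>t. dg ((t - a) / h) / h * c \<partial>lborel) = c" by simp
qed

end

lemma powr_convex_bound:
  fixes a h s :: real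
  assumes a: "0 < a" and h: "0 \<le> h" and s: "1 \<le> s"
  shows "a powr (1 - s) - (a + h) powr (1 - s) \<le> (s - 1) * h * a powr (- s)"
proof -
  let ?g = "\<lambda>x. x powr (1 - s) + (s - 1) * a powr (- s) * x"
  let ?g' = "\<lambda>x. (1 - s) * x powr (- s) + (s - 1) * a powr (- s)"
  have d: "(?g has_real_derivative ?g' x) (at x)" if "x \<in> {a..a+h}" for x
  proof -
    have x: "x > 0" using that a by auto
    have p: "((\<lambda>x. x powr (1 - s)) has_real_derivative (1 - s) * x powr (1 - s - 1)) (at x)"
      by (rule has_real_derivative_powr) (use x in auto)
    have "(?g has_real_derivative (1 - s) * x powr (1 - s - 1) + (s - 1) * a powr (- s) * 1) (at x)"
      by (intro DERIV_add p DERIV_cmult DERIV_ident)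
    then show ?thesis by simp
  qed
  have nn: "?g' x \<ge> 0" if "x \<in> {a..a+h}" for x
  proof -
    have "x powr (- s) \<le> a powr (- s)" using that a s by (intro powr_mono2') auto
    then have "(s - 1) * x powr (- s) \<le> (s - 1) * a powr (- s)" using s by (intro mult_left_mono) auto
    then show ?thesis by (simp add: algebra_simps)
  qed
  have "?g a \<le> ?g (a + h)" by (rule deriv_nonneg_imp_mono[OF d nn]) (use h in auto)
  then show ?thesis by (simp add: algebra_simps)
qed

context cfg
begin

lemma J2_ge:
  assumes s: "1 \<le> s"
  shows "(s - 1) * (\<integral>t. \<bar>psi t\<bar> / dk t powr s \<partial>lborel) \<ge> 2 * ((a + h) powr (1 - s) - R powr (1 - s))"
proof -
  define f1 where "f1 t = indicator {a+h..R} t *\<^sub>R ((s - 1) * t powr (- s))" for t :: real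
  define f2 where "f2 t = indicator {R..2*R-a-h} t *\<^sub>R ((s - 1) * (2 * R - t) powr (- s))" for t :: real
  have c1: "continuous_on {a+h..R} (\<lambda>t. (s - 1) * t powr (- s))"
    using a h by (intro continuous_intros) auto
  have c2: "continuous_on {R..2*R-a-h} (\<lambda>t. (s - 1) * (2 * R - t) powr (- s))"
    using a h ah by (intro continuous_intros) auto
  have i1: "integrable lborel f1" unfolding f1_def by (rule borel_integrable_compact[OF compact_Icc c1])
  have i2: "integrable lborel f2" unfolding f2_def by (rule borel_integrable_compact[OF compact_Icc c2])
  have I1: "(\<integral>t. f1 t \<partial>lborel) = (- (R powr (1 - s))) - (- ((a + h) powr (1 - s)))"
    unfolding f1_def
  proof (rule integral_FTC_atLeastAtMost[OF _ _ c1])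
    show "a + h \<le> R" using ah by simp
    fix x assume x: "a + h \<le> x" "x \<le> R"
    then have "x > 0" using a h by auto
    then have p: "((\<lambda>x. x powr (1 - s)) has_real_derivative (1 - s) * x powr (1 - s - 1)) (at x)"
      by (intro has_real_derivative_powr)
    have "((\<lambda>t. - (t powr (1 - s))) has_real_derivative - ((1 - s) * x powr (1 - s - 1))) (at x)"
      by (rule DERIV_minus[OF p])
    then have "((\<lambda>t. - (t powr (1 - s))) has_real_derivative (s - 1) * x powr (- s)) (at x)"
      by (simp add: algebra_simps)
    then show "((\<lambda>t. - (t powr (1 - s))) has_vector_derivative (s - 1) * x powr (- s)) (at x within {a + h..R})"
      by (simp add: has_real_derivative_iff_has_vector_derivative has_vector_derivative_at_within)
  qed
  have I2: "(\<integral>t. f2 t \<partial>lborel) = (2 * R - (2 * R - a - h)) powr (1 - s) - (2 * R - R) powr (1 - s)"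
    unfolding f2_def
  proof (rule integral_FTC_atLeastAtMost[OF _ _ c2])
    show "R \<le> 2 * R - a - h" using ah a h by simp
    fix x assume x: "R \<le> x" "x \<le> 2 * R - a - h"
    then have "2 * R - x > 0" using a h by auto
    then have "((\<lambda>t. (2 * R - t) powr (1 - s)) has_real_derivative (1 - s) * (2 * R - x) powr (1 - s - of_nat 1) * (- 1)) (at x)"
      by (intro DERIV_fun_powr) (auto intro!: derivative_eq_intros)
    then have "((\<lambda>t. (2 * R - t) powr (1 - s)) has_real_derivative (s - 1) * (2 * R - x) powr (- s)) (at x)"
      by (simp add: algebra_simps)
    then show "((\<lambda>t. (2 * R - t) powr (1 - s)) has_vector_derivative (s - 1) * (2 * R - x) powr (- s)) (at x within {R..2 * R - a - h})"
      by (simp add: has_real_derivative_iff_has_vector_derivative has_vector_derivative_at_within)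
  qed
  have pt: "f1 t + f2 t \<le> (s - 1) * (\<bar>psi t\<bar> / dk t powr s)" if tR: "t \<noteq> R" for t
  proof -
    consider "a + h \<le> t \<and> t < R" | "R < t \<and> t \<le> 2 * R - a - h" | "\<not> (a + h \<le> t \<and> t \<le> 2 * R - a - h)"
      using tR by linarith
    then show ?thesis
    proof cases
      case 1
      then have "psi t = 1" "dk t = t" "t > 0" using psi_one[of t] a h ah by (auto simp: dk_def)
      then show ?thesis using 1 by (simp add: f1_def f2_def powr_minus divide_inverse)
    next
      case 2
      then have "psi t = 1" "dk t = 2 * R - t" "2 * R - t > 0" using psi_one[of t] a h ah by (auto simp: dk_def)
      then show ?thesis using 2 by (simp add: f1_def f2_def powr_minus divide_inverse)
    next
      case 3
      then have "f1 t = 0" "f2 t = 0" using a h ah by (auto simp: f1_def f2_def)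
      then show ?thesis using s by (simp add: divide_nonneg_nonneg)
    qed
  qed
  have "(\<integral>t. f1 t + f2 t \<partial>lborel) \<le> (\<integral>t. (s - 1) * (\<bar>psi t\<bar> / dk t powr s) \<partial>lborel)"
  proof (rule integral_mono_AE)
    show "integrable lborel (\<lambda>t. f1 t + f2 t)" using i1 i2 by simp
    show "integrable lborel (\<lambda>t. (s - 1) * (\<bar>psi t\<bar> / dk t powr s))"
      by (intro integrable_mult_right psiw_int)
    show "AE t in lborel. f1 t + f2 t \<le> (s - 1) * (\<bar>psi t\<bar> / dk t powr s)"
      using AE_lborel_singleton[of R] by eventually_elim (use pt in auto)
  qed
  also have "\<dots> = (s - 1) * (\<integral>t. \<bar>psi t\<bar> / dk t powr s \<partial>lborel)"
    by (rule Bochner_Integration.integral_mult_right) (rule psiw_int)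
  finally have "(\<integral>t. f1 t \<partial>lborel) + (\<integral>t. f2 t \<partial>lborel) \<le> (s - 1) * (\<integral>t. \<bar>psi t\<bar> / dk t powr s \<partial>lborel)"
    using i1 i2 by simp
  then show ?thesis using I1 I2 by simp
qed

end

lemma infdist_slab:
  fixes x :: "real^'n::finite"
  assumes R: "R > 0" and x: "x \<in> slab k R"
  shows "infdist x (UNIV - slab k R) = min (x $ k) (2 * R - x $ k)"
proof (rule antisym)
  have xk: "0 < x $ k" "x $ k < 2 * R" using x by (auto simp: slab_def)
  let ?y1 = "x - (x $ k) *\<^sub>R axis k 1" and ?y2 = "x + (2 * R - x $ k) *\<^sub>R axis k 1"
  have y1: "?y1 \<in> UNIV - slab k R" by (simp add: slab_def axis_def)
  have y2: "?y2 \<in> UNIV - slab k R" by (simp add: slab_def axis_def)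
  have "infdist x (UNIV - slab k R) \<le> dist x ?y1" by (rule infdist_le[OF y1])
  also have "\<dots> = x $ k" using xk by (simp add: dist_norm)
  finally have 1: "infdist x (UNIV - slab k R) \<le> x $ k" .
  have "infdist x (UNIV - slab k R) \<le> dist x ?y2" by (rule infdist_le[OF y2])
  also have "\<dots> = 2 * R - x $ k" using xk by (simp add: dist_norm norm_minus_commute)
  finally have 2: "infdist x (UNIV - slab k R) \<le> 2 * R - x $ k" .
  show "infdist x (UNIV - slab k R) \<le> min (x $ k) (2 * R - x $ k)" using 1 2 by simp
  have ne: "UNIV - slab k R \<noteq> {}" using y1 by blast
  show "min (x $ k) (2 * R - x $ k) \<le> infdist x (UNIV - slab k R)"
    unfolding infdist_notempty[OF ne]
  proof (rule cINF_greatest[OF ne])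
    fix y assume y: "y \<in> UNIV - slab k R"
    have "\<bar>x $ k - y $ k\<bar> \<le> dist x y"
      using component_le_norm_cart[of "x - y" k] by (simp add: dist_norm)
    moreover have "y $ k \<le> 0 \<or> y $ k \<ge> 2 * R" using y by (auto simp: slab_def)
    ultimately show "min (x $ k) (2 * R - x $ k) \<le> dist x y" by auto
  qed
qed

lemma infdist_out: "x \<notin> S \<Longrightarrow> infdist x (UNIV - S) = 0"
  by simp

context cfg
begin

definition Hf :: "'n::finite \<Rightarrow> 'n \<Rightarrow> real \<Rightarrow> real" where
  "Hf k i = (if i = k then psi else Pl)"
definition dH :: "'n::finite \<Rightarrow> 'n \<Rightarrow> real \<Rightarrow> real" where
  "dH k i = (if i = k then dpsi else dPl)"
definition uu :: "'n::finite \<Rightarrow> real^'n \<Rightarrow> real" where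
  "uu k x = (\<Prod>i\<in>UNIV. Hf k i (x $ i))"

lemma cinf_Hf: "cinf (Hf k i)" by (simp add: Hf_def cinf_psi cinf_Pl)
lemma deriv_Hf: "deriv (Hf k i) = dH k i" by (simp add: Hf_def dH_def deriv_psi deriv_Pl)

lemma uu_eq: "uu k = (\<lambda>x. \<Prod>i\<in>UNIV. Hf k i (x $ i))" by (simp add: uu_def[abs_def])

lemma grad_uu: "grad (uu k) x $ j = (\<Prod>i\<in>UNIV. (if i = j then dH k i else Hf k i) (x $ i))"
  unfolding uu_eq grad_prod[OF cinf_Hf] deriv_Hf ..

lemma grad_uu_vec: "grad (uu k) = (\<lambda>x. \<chi> j. \<Prod>i\<in>UNIV. (if i = j then dH k i else Hf k i) (x $ i))"
  by (auto simp: vec_eq_iff grad_uu)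

lemma smooth_uu: "smooth (uu k)"
  unfolding uu_eq by (rule smooth_prod[OF cinf_Hf])

lemma Hf_k_zero: "t \<le> a \<or> t \<ge> 2 * R - a \<Longrightarrow> Hf k k t = 0" by (simp add: Hf_def psi_zero)
lemma dH_k_zero: "t \<le> a \<or> t \<ge> 2 * R - a \<Longrightarrow> dH k k t = 0" by (simp add: dH_def dpsi_zero)

lemma uu_support:
  fixes k :: "'n::finite"
  defines "lo \<equiv> (\<chi> i. if i = k then a else - L - 1) :: real^'n"
  defines "hi \<equiv> (\<chi> i. if i = k then 2 * R - a else L + 1) :: real^'n"
  shows "{x. uu k x \<noteq> 0} \<subseteq> cbox lo hi"
proof
  fix x assume "x \<in> {x. uu k x \<noteq> 0}"
  then have nz: "Hf k i (x $ i) \<noteq> 0" for i by (auto simp: uu_def)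
  show "x \<in> cbox lo hi" unfolding mem_box_cart(2)
  proof
    fix i
    show "lo $ i \<le> x $ i \<and> x $ i \<le> hi $ i"
    proof (cases "i = k")
      case True
      have "\<not> (x $ k \<le> a \<or> x $ k \<ge> 2 * R - a)" using nz[of k] psi_zero[of "x $ k"] by (auto simp: Hf_def)
      then show ?thesis using True by (auto simp: lo_def hi_def)
    next
      case False
      have "\<not> (x $ i \<le> -L - 1 \<or> x $ i \<ge> L + 1)" using nz[of i] Pl_zero[of "x $ i"] False by (auto simp: Hf_def)
      then show ?thesis using False by (auto simp: lo_def hi_def)
    qed
  qed
qed

lemma uu_Cc:
  fixes k :: "'n::finite"
  shows "uu k \<in> Cc_inf (slab k R)"
proof -
  define lo where "lo = ((\<chi> i. if i = k then a else - L - 1) :: real^'n)"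
  define hi where "hi = ((\<chi> i. if i = k then 2 * R - a else L + 1) :: real^'n)"
  have sub: "tsupport (uu k) \<subseteq> cbox lo hi"
    unfolding tsupport_def lo_def hi_def by (rule closure_minimal[OF uu_support closed_cbox])
  have "compact (cbox lo hi \<inter> tsupport (uu k))"
    by (rule compact_Int_closed) (auto simp: tsupport_def)
  moreover have "cbox lo hi \<inter> tsupport (uu k) = tsupport (uu k)" using sub by blast
  ultimately have c: "compact (tsupport (uu k))" by simp
  have "cbox lo hi \<subseteq> slab k R"
    using a ah h by (auto simp: mem_box_cart slab_def lo_def hi_def dest!: spec[of _ k])
  then show ?thesis using sub c smooth_uu by (auto simp: Cc_inf_def)
qed

lemma uu_nonzero:
  fixes k :: "'n::finite"
  shows "uu k \<noteq> (\<lambda>x. 0)"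
proof
  assume z: "uu k = (\<lambda>x. 0)"
  define x0 where "x0 = ((\<chi> i. if i = k then R else 0) :: real^'n)"
  have "Hf k i (x0 $ i) = 1" for i
    using psi_one[of R] Pl_one[of 0] a h ah L by (auto simp: Hf_def x0_def)
  then have "uu k x0 = 1" by (simp add: uu_def)
  then show False using z by simp
qed

end

context cfg
begin

lemma R_pos: "R > 0" using a h ah by simp

definition d0 :: "'n::finite \<Rightarrow> real^'n \<Rightarrow> real" where
  "d0 k x = infdist x (UNIV - slab k R)"

lemma d0_in: "x \<in> slab k R \<Longrightarrow> d0 k x = dk (x $ k)"
  by (simp add: d0_def infdist_slab[OF R_pos] dk_def)

lemma d0_out: "x \<notin> slab k R \<Longrightarrow> d0 k x = 0"
  by (simp add: d0_def)

lemma d0_nonneg: "d0 k x \<ge> 0" by (simp add: d0_def infdist_nonneg)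

lemma dk_pos_slab: "x \<in> slab k R \<Longrightarrow> dk (x $ k) > 0"
  by (auto simp: slab_def dk_def)

definition Tw :: "real \<Rightarrow> 'n::finite \<Rightarrow> 'n \<Rightarrow> 'n \<Rightarrow> real \<Rightarrow> real" where
  "Tw w k j i t = (if i = j then \<bar>dH k i t\<bar> else \<bar>Hf k i t\<bar>) / (if i = k then dk t powr w else 1)"

lemma Tw_nonneg: "Tw w k j i t \<ge> 0" by (simp add: Tw_def)

lemma upper_pt:
  fixes k :: "'n::finite" and x :: "real^'n"
  shows "norm (grad (uu k) x) / d0 k x powr w \<le> (\<Sum>j\<in>UNIV. \<Prod>i\<in>UNIV. Tw w k j i (x $ i))"
proof (cases "x \<in> slab k R")
  case False
  then show ?thesis by (simp add: d0_out sum_nonneg prod_nonneg Tw_nonneg)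
next
  case True
  let ?D = "dk (x $ k) powr w"
  have D: "?D > 0" using dk_pos_slab[OF True] by simp
  have eq: "(\<Prod>i\<in>UNIV. Tw w k j i (x $ i)) = \<bar>grad (uu k) x $ j\<bar> / ?D" for j
  proof -
    have "(\<Prod>i\<in>UNIV. Tw w k j i (x $ i)) =
       (\<Prod>i\<in>UNIV. \<bar>(if i = j then dH k i else Hf k i) (x $ i)\<bar>) / (\<Prod>i\<in>UNIV. if i = k then dk (x $ i) powr w else 1)"
      unfolding Tw_def prod_dividef[symmetric] by (intro prod.cong) auto
    also have "\<dots> = \<bar>grad (uu k) x $ j\<bar> / ?D"
      by (simp add: grad_uu abs_prod)
    finally show ?thesis .
  qed
  have "norm (grad (uu k) x) / d0 k x powr w \<le> (\<Sum>j\<in>UNIV. \<bar>grad (uu k) x $ j\<bar>) / ?D"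
    using D d0_in[OF True] norm_le_l1_cart[of "grad (uu k) x"] by (simp add: divide_right_mono)
  also have "\<dots> = (\<Sum>j\<in>UNIV. \<Prod>i\<in>UNIV. Tw w k j i (x $ i))"
    by (simp add: eq sum_divide_distrib)
  finally show ?thesis .
qed

definition Aw :: "real \<Rightarrow> 'n::finite \<Rightarrow> 'n \<Rightarrow> real \<Rightarrow> real" where
  "Aw w k i t = (if i = k then dg ((t - a) / h) / h * (a + h) powr (- w) else Pl t)"

lemma lower_pt:
  fixes k :: "'n::finite" and x :: "real^'n"
  assumes w: "w \<ge> 0"
  shows "(\<Prod>i\<in>UNIV. Aw w k i (x $ i)) \<le> norm (grad (uu k) x) / d0 k x powr w"
proof -
  let ?t = "x $ k"
  have split: "(\<Prod>i\<in>UNIV. Aw w k i (x $ i)) = Aw w k k ?t * (\<Prod>i\<in>UNIV-{k}. Pl (x $ i))"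
    by (subst prod.remove[of UNIV k]) (auto simp: Aw_def intro!: prod.cong)
  show ?thesis
  proof (cases "a \<le> ?t \<and> ?t \<le> a + h")
    case False
    then have "(?t - a) / h < 0 \<or> (?t - a) / h > 1" using h by (auto simp: field_simps)
    then have "dg ((?t - a) / h) = 0" using dg_0 dg_1 by fastforce
    then have "Aw w k k ?t = 0" by (simp add: Aw_def)
    then have z: "(\<Prod>i\<in>UNIV. Aw w k i (x $ i)) = 0" unfolding split by (simp only: mult_zero_left)
    have "0 \<le> norm (grad (uu k) x) / d0 k x powr w" using d0_nonneg[of k x] by simp
    then show ?thesis unfolding z .
  next
    case True
    have xs: "x \<in> slab k R" using True a h ah by (auto simp: slab_def)
    have d: "d0 k x = ?t" using d0_in[OF xs] True ah by (simp add: dk_def)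
    have tp: "?t > 0" using True a by simp
    have gk: "grad (uu k) x $ k = dpsi ?t * (\<Prod>i\<in>UNIV-{k}. Pl (x $ i))"
      by (simp add: grad_uu, subst prod.remove[of UNIV k]) (auto simp: dH_def Hf_def intro!: prod.cong)
    have dp: "dpsi ?t = dg ((?t - a) / h) / h" using dpsi_left True by simp
    have n1: "0 \<le> dpsi ?t" using dp h dg_nonneg[of "(?t - a) / h"] by simp
    have n2: "0 \<le> (\<Prod>i\<in>UNIV-{k}. Pl (x $ i))" by (intro prod_nonneg) (simp add: Pl_nonneg)
    have nn: "0 \<le> dpsi ?t * (\<Prod>i\<in>UNIV-{k}. Pl (x $ i))" using n1 n2 by (rule mult_nonneg_nonneg)
    have "(\<Prod>i\<in>UNIV. Aw w k i (x $ i)) = dpsi ?t * (\<Prod>i\<in>UNIV-{k}. Pl (x $ i)) / (a + h) powr w"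
      unfolding split by (simp add: Aw_def dp powr_minus divide_inverse)
    also have "\<dots> \<le> dpsi ?t * (\<Prod>i\<in>UNIV-{k}. Pl (x $ i)) / ?t powr w"
      using nn tp True w by (intro divide_left_mono powr_mono2 mult_pos_pos) auto
    also have "\<dots> \<le> norm (grad (uu k) x) / d0 k x powr w"
      unfolding d using component_le_norm_cart[of "grad (uu k) x" k] gk nn tp
      by (intro divide_right_mono) auto
    finally show ?thesis .
  qed
qed

definition Vw :: "real \<Rightarrow> 'n::finite \<Rightarrow> 'n \<Rightarrow> real \<Rightarrow> real" where
  "Vw w k i t = \<bar>Hf k i t\<bar> / (if i = k then dk t powr w else 1)"

lemma V_pt:
  fixes k :: "'n::finite" and x :: "real^'n"
  shows "\<bar>uu k x\<bar> / d0 k x powr w = (\<Prod>i\<in>UNIV. Vw w k i (x $ i))"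
proof (cases "x \<in> slab k R")
  case False
  then have "x $ k \<le> a \<or> x $ k \<ge> 2 * R - a" using a by (auto simp: slab_def)
  then have z: "Vw w k k (x $ k) = 0" by (simp add: Vw_def Hf_k_zero)
  have ex: "\<exists>i\<in>UNIV. Vw w k i (x $ i) = 0" using z by blast
  have "(\<Prod>i\<in>UNIV. Vw w k i (x $ i)) = 0" by (rule prod_zero[OF _ ex]) simp
  then show ?thesis using False by (simp add: d0_out)
next
  case True
  have "(\<Prod>i\<in>UNIV. Vw w k i (x $ i)) =
       (\<Prod>i\<in>UNIV. \<bar>Hf k i (x $ i)\<bar>) / (\<Prod>i\<in>UNIV. if i = k then dk (x $ i) powr w else 1)"
    unfolding Vw_def prod_dividef[symmetric] by (intro prod.cong) auto
  then show ?thesis using d0_in[OF True] by (simp add: uu_def abs_prod)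
qed

end

context cfg
begin

lemma Pl_abs: "\<bar>Pl t\<bar> = Pl t" using Pl_nonneg by simp

lemma Tw_int: "integrable lborel (Tw w k j i)"
proof -
  consider "i = k" "j = k" | "i = k" "j \<noteq> k" | "i \<noteq> k" "i = j" | "i \<noteq> k" "i \<noteq> j" by blast
  then show ?thesis
  proof cases
    case 1 then show ?thesis using dpsiw_int[of w] by (simp add: Tw_def[abs_def] dH_def)
  next
    case 2 then show ?thesis using psiw_int[of w] by (simp add: Tw_def[abs_def] Hf_def)
  next
    case 3 then show ?thesis using dPl_int by (simp add: Tw_def[abs_def] dH_def)
  next
    case 4 then show ?thesis using Pl_int by (simp add: Tw_def[abs_def] Hf_def Pl_abs)
  qed
qed

lemma Aw_int: "integrable lborel (Aw w k i)"
  using K_piece(1)[of "(a + h) powr (- w)"] Pl_int by (cases "i = k") (simp_all add: Aw_def[abs_def])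

lemma Vw_int: "integrable lborel (Vw w k i)"
  using psiw_int[of w] Pl_int by (cases "i = k") (simp_all add: Vw_def[abs_def] Hf_def Pl_abs)

lemma cinf_dH: "cinf (dH k i)" by (simp add: dH_def cinf_dpsi cinf_dPl)

lemma cont_coord: "cinf f \<Longrightarrow> continuous_on UNIV (\<lambda>x::real^'n::finite. f (x $ i))"
  by (rule continuous_on_compose2[OF cinf_cont]) (auto intro: continuous_intros)

lemma grad_cont: "continuous_on UNIV (grad (uu k))"
  unfolding grad_uu_vec
  by (intro continuous_intros cont_coord) (simp add: cinf_dH cinf_Hf)

lemma d0_cont: "continuous_on UNIV (d0 k)"
  unfolding d0_def[abs_def] by (intro continuous_intros)

lemma fw_meas: "(\<lambda>x. norm (grad (uu k) x) / d0 k x powr w) \<in> borel_measurable lborel"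
proof -
  have [measurable]: "grad (uu k) \<in> borel_measurable borel" by (rule borel_measurable_continuous_onI[OF grad_cont])
  have [measurable]: "d0 k \<in> borel_measurable borel" by (rule borel_measurable_continuous_onI[OF d0_cont])
  show ?thesis by measurable
qed

lemma fw_int: "integrable lborel (\<lambda>x::real^'n::finite. norm (grad (uu k) x) / d0 k x powr w)"
proof (rule Bochner_Integration.integrable_bound)
  show "integrable lborel (\<lambda>x::real^'n. \<Sum>j\<in>UNIV. \<Prod>i\<in>UNIV. Tw w k j i (x $ i))"
    by (intro Bochner_Integration.integrable_sum integral_vec_prod(1) Tw_int)
  show "(\<lambda>x::real^'n. norm (grad (uu k) x) / d0 k x powr w) \<in> borel_measurable lborel" by (rule fw_meas)
  show "AE x in lborel. norm (norm (grad (uu k) x) / d0 k x powr w) \<le> norm (\<Sum>j\<in>UNIV. \<Prod>i\<in>UNIV. Tw w k j i (x $ i))"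
  proof (rule AE_I2)
    fix x :: "real^'n"
    have "0 \<le> norm (grad (uu k) x) / d0 k x powr w" using d0_nonneg[of k x] by simp
    then show "norm (norm (grad (uu k) x) / d0 k x powr w) \<le> norm (\<Sum>j\<in>UNIV. \<Prod>i\<in>UNIV. Tw w k j i (x $ i))"
      using upper_pt[of k x w] by simp
  qed
qed

definition Mp where "Mp = (\<integral>t. Pl t \<partial>lborel)"
definition Qk :: "'n::finite \<Rightarrow> real" where "Qk k = (\<Prod>i\<in>UNIV-{k}. Mp)"

lemma Mp_pos: "Mp \<ge> 2 * L" "Mp > 0" using Pl_integral_ge L by (auto simp: Mp_def)

lemma Qk_pos: "Qk k > 0" using Mp_pos by (simp add: Qk_def)

lemma D_lower:
  fixes k :: "'n::finite"
  assumes w: "w \<ge> 0"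
  shows "(a + h) powr (- w) * Qk k \<le> (\<integral>x. norm (grad (uu k) x) / d0 k x powr w \<partial>(lborel :: (real^'n) measure))"
proof -
  have "(\<integral>x. (\<Prod>i\<in>UNIV. Aw w k i (x $ i)) \<partial>(lborel :: (real^'n) measure)) = (\<Prod>i\<in>UNIV. \<integral>t. Aw w k i t \<partial>lborel)"
    by (rule integral_vec_prod(2)[OF Aw_int])
  also have "\<dots> = (\<integral>t. Aw w k k t \<partial>lborel) * (\<Prod>i\<in>UNIV-{k}. \<integral>t. Aw w k i t \<partial>lborel)"
    by (subst prod.remove[of UNIV k]) auto
  also have "\<dots> = (a + h) powr (- w) * Qk k"
    using K_piece(2)[of "(a + h) powr (- w)"] by (simp add: Aw_def[abs_def] Qk_def Mp_def)
  finally have e: "(\<integral>x. (\<Prod>i\<in>UNIV. Aw w k i (x $ i)) \<partial>(lborel :: (real^'n) measure)) = (a + h) powr (- w) * Qk k" .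
  have "(\<integral>x. (\<Prod>i\<in>UNIV. Aw w k i (x $ i)) \<partial>(lborel :: (real^'n) measure)) \<le> (\<integral>x. norm (grad (uu k) x) / d0 k x powr w \<partial>(lborel :: (real^'n) measure))"
    by (rule integral_mono'[OF fw_int]) (use lower_pt[OF w] d0_nonneg in auto)
  then show ?thesis using e by simp
qed

definition Bw where "Bw w = (\<integral>t. \<bar>psi t\<bar> / dk t powr w \<partial>lborel)"
definition J1w where "J1w w = (\<integral>t. \<bar>dpsi t\<bar> / dk t powr w \<partial>lborel)"

lemma Bw_nonneg: "Bw w \<ge> 0" unfolding Bw_def by (rule integral_nonneg_AE) auto

lemma int_Tw:
  "(\<integral>t. Tw w k j i t \<partial>lborel) =
     (if i = k then (if j = k then J1w w else Bw w) else (if i = j then (\<integral>t. \<bar>dPl t\<bar> \<partial>lborel) else Mp))"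
  by (auto simp: Tw_def[abs_def] Hf_def dH_def J1w_def Bw_def Mp_def Pl_abs)

lemma prod_Tw_k: "(\<Prod>i\<in>UNIV. \<integral>t. Tw w k k i t \<partial>lborel) = J1w w * Qk k"
  by (subst prod.remove[of UNIV k]) (auto simp: int_Tw Qk_def intro!: prod.cong)

lemma prod_Tw_j:
  assumes j: "j \<noteq> k"
  shows "(\<Prod>i\<in>UNIV. \<integral>t. Tw w k j i t \<partial>lborel) \<le> 2 * Bw w * Qk k / Mp"
proof -
  let ?r = "(\<Prod>i\<in>UNIV-{k}-{j}. Mp)"
  define c where "c i = (\<integral>t. Tw w k j i t \<partial>lborel)" for i
  have A: "(\<Prod>i\<in>UNIV. c i) = c k * (\<Prod>i\<in>UNIV-{k}. c i)" by (rule prod.remove) auto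
  have B: "(\<Prod>i\<in>UNIV-{k}. c i) = c j * (\<Prod>i\<in>UNIV-{k}-{j}. c i)" by (rule prod.remove) (use j in auto)
  have C: "(\<Prod>i\<in>UNIV-{k}-{j}. c i) = ?r" by (rule prod.cong) (auto simp: c_def int_Tw)
  have "(\<Prod>i\<in>UNIV. \<integral>t. Tw w k j i t \<partial>lborel) = Bw w * ((\<integral>t. \<bar>dPl t\<bar> \<partial>lborel) * ?r)"
    using A B C j by (simp add: c_def[symmetric]) (simp add: c_def int_Tw)
  also have "\<dots> \<le> Bw w * (2 * ?r)"
    using dPl_integral_le Bw_nonneg Mp_pos by (intro mult_left_mono mult_right_mono) auto
  also have "Qk k = Mp * ?r" unfolding Qk_def by (rule prod.remove) (use j in auto)
  then have "Bw w * (2 * ?r) = 2 * Bw w * Qk k / Mp" using Mp_pos by (simp add: field_simps)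
  finally show ?thesis .
qed

lemma I1_upper:
  fixes k :: "'n::finite"
  shows "(\<integral>x. norm (grad (uu k) x) / d0 k x powr w \<partial>(lborel :: (real^'n) measure))
     \<le> J1w w * Qk k + real CARD('n) * (2 * Bw w * Qk k / Mp)"
proof -
  have "(\<integral>x. norm (grad (uu k) x) / d0 k x powr w \<partial>(lborel :: (real^'n) measure))
      \<le> (\<integral>x. (\<Sum>j\<in>UNIV. \<Prod>i\<in>UNIV. Tw w k j i (x $ i)) \<partial>(lborel :: (real^'n) measure))"
    by (rule integral_mono'[OF Bochner_Integration.integrable_sum[OF integral_vec_prod(1)[OF Tw_int]]])
       (auto intro: upper_pt sum_nonneg prod_nonneg Tw_nonneg)
  also have "\<dots> = (\<Sum>j\<in>UNIV. \<Prod>i\<in>UNIV. \<integral>t. Tw w k j i t \<partial>lborel)"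
    by (subst Bochner_Integration.integral_sum[OF integral_vec_prod(1)[OF Tw_int]])
       (simp add: integral_vec_prod(2)[OF Tw_int])
  also have "\<dots> = J1w w * Qk k + (\<Sum>j\<in>UNIV-{k}. \<Prod>i\<in>UNIV. \<integral>t. Tw w k j i t \<partial>lborel)"
    by (subst sum.remove[of UNIV k]) (auto simp: prod_Tw_k)
  also have "(\<Sum>j\<in>UNIV-{k}. \<Prod>i\<in>UNIV. \<integral>t. Tw w k j i t \<partial>lborel) \<le> (\<Sum>j\<in>UNIV-{k}. 2 * Bw w * Qk k / Mp)"
    by (intro sum_mono prod_Tw_j) auto
  also have "\<dots> \<le> real CARD('n) * (2 * Bw w * Qk k / Mp)"
  proof -
    have "0 \<le> 2 * Bw w * Qk k / Mp" using Bw_nonneg[of w] Qk_pos[of k] Mp_pos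
      by (intro divide_nonneg_pos mult_nonneg_nonneg) auto
    moreover have "card (UNIV - {k}) \<le> CARD('n)" by (rule card_mono) auto
    ultimately have "real (card (UNIV - {k})) * (2 * Bw w * Qk k / Mp) \<le> real CARD('n) * (2 * Bw w * Qk k / Mp)"
      by (intro mult_right_mono) auto
    then show ?thesis by (simp only: sum_constant)
  qed
  finally show ?thesis by simp
qed

lemma I2_eq:
  fixes k :: "'n::finite"
  shows "(\<integral>x. \<bar>uu k x\<bar> / d0 k x powr w \<partial>(lborel :: (real^'n) measure)) = Bw w * Qk k"
proof -
  have "(\<integral>x. \<bar>uu k x\<bar> / d0 k x powr w \<partial>(lborel :: (real^'n) measure)) = (\<integral>x. (\<Prod>i\<in>UNIV. Vw w k i (x $ i)) \<partial>(lborel :: (real^'n) measure))"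
    by (simp add: V_pt)
  also have "\<dots> = (\<Prod>i\<in>UNIV. \<integral>t. Vw w k i t \<partial>lborel)" by (rule integral_vec_prod(2)[OF Vw_int])
  also have "\<dots> = Bw w * Qk k"
    by (subst prod.remove[of UNIV k]) (auto simp: Vw_def[abs_def] Hf_def Bw_def Qk_def Mp_def Pl_abs intro!: prod.cong)
  finally show ?thesis .
qed

end

context cfg
begin

lemma Bw_upper:
  assumes s: "s \<ge> 1"
  shows "Bw (s - 1) \<le> 2 * R * a powr (1 - s)"
proof -
  have pt: "\<bar>psi t\<bar> / dk t powr (s - 1) \<le> indicator {a..2*R-a} t *\<^sub>R a powr (1 - s)" for t
  proof (cases "a \<le> t \<and> t \<le> 2 * R - a")
    case True
    have "a powr (s - 1) \<le> dk t powr (s - 1)" using dk_ge[of t] True a s by (intro powr_mono2) auto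
    moreover have "0 < a powr (s - 1)" using a by simp
    ultimately have "\<bar>psi t\<bar> / dk t powr (s - 1) \<le> 1 / a powr (s - 1)"
      using psi_le1[of t] psi_nonneg[of t] by (intro frac_le) auto
    also have "1 / a powr (s - 1) = a powr (1 - s)" using a by (simp add: powr_minus_divide[symmetric] powr_minus)
    finally show ?thesis using True by simp
  next
    case False
    then show ?thesis using psi_zero[of t] by auto
  qed
  have i: "integrable lborel (\<lambda>t. indicator {a..2*R-a} t *\<^sub>R a powr (1 - s))"
    by (rule borel_integrable_compact) auto
  have "Bw (s - 1) \<le> (\<integral>t. indicator {a..2*R-a} t *\<^sub>R a powr (1 - s) \<partial>lborel)"
    unfolding Bw_def by (rule integral_mono'[OF i]) (use pt in auto)
  also have "\<dots> = (2 * R - 2 * a) * a powr (1 - s)"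
    using a ah h by (simp add: measure_def)
  also have "\<dots> \<le> 2 * R * a powr (1 - s)" using a by (intro mult_right_mono) auto
  finally show ?thesis .
qed

end

lemma lin_aux: "(x::real) \<le> 2 * A \<Longrightarrow> 2 * (C - P) \<le> y \<Longrightarrow> A - C \<le> t \<Longrightarrow> x - y \<le> 2 * t + 2 * P"
  by (smt (verit))

lemma set_int_full:
  fixes f :: "'a::euclidean_space \<Rightarrow> real"
  assumes "\<And>x. x \<notin> S \<Longrightarrow> f x = 0"
  shows "(LINT x:S|lborel. f x) = (\<integral>x. f x \<partial>lborel)"
  unfolding set_lebesgue_integral_def
  by (rule Bochner_Integration.integral_cong) (auto simp: indicator_def assms)

theorem lemma2p14:
  fixes R \<alpha> s C0 :: real and k :: "'n::finite"
  defines "S \<equiv> slab k R"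
  defines "d \<equiv> (\<lambda>x::real^'n. infdist x (UNIV - S))"
  assumes "R > 0" and "\<alpha> \<ge> 0" and "s \<ge> 1" and "C0 > 0"
  assumes H: "\<forall>u \<in> Cc_inf S - {(\<lambda>x. 0)}.
     ((LINT x:S|lborel. norm (grad u x) / d x powr (s - 1))
        - (s - 1) * (LINT x:S|lborel. \<bar>u x\<bar> / d x powr s))
     / (LINT x:S|lborel. norm (grad u x) / d x powr \<alpha>) \<ge> C0"
  shows "\<alpha> = 0"
proof (rule ccontr)
  assume "\<alpha> \<noteq> 0"
  then have al: "\<alpha> > 0" using assms(4) by simp
  have R: "R > 0" and s: "s \<ge> 1" and C0: "C0 > 0" using assms by auto
  define Kc where "Kc = 2 * (s - 1) + 2 * R powr (1 - s) + 1"
  have "R powr (1 - s) \<ge> 0" by simp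
  then have Kc: "Kc > 0" using s unfolding Kc_def by (intro add_nonneg_pos add_nonneg_nonneg) auto
  define b where "b = (C0 / Kc) powr (1 / \<alpha>)"
  have b: "b > 0" using C0 Kc by (simp add: b_def)
  have bpow: "b powr \<alpha> = C0 / Kc" using C0 Kc al by (simp add: b_def powr_powr)
  define a where "a = min (min 1 (R / 4)) (b / 4)"
  have a: "0 < a" "a \<le> 1" "a \<le> R / 4" "a \<le> b / 4" using R b by (auto simp: a_def)
  define h where "h = a powr s"
  have h: "0 < h" "h \<le> a" using a s by (auto simp: h_def intro: powr_mono'[of 1 s a, simplified])
  define L where "L = real CARD('n) * (2 * R * a powr (1 - s)) + 1"
  have L: "L > 0" using a R by (simp add: L_def add_nonneg_pos)
  interpret c: cfg R a h L
    by unfold_locales (use a h L R in auto)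
  let ?u = "c.uu k"
  have dd: "d = c.d0 k" by (simp add: d_def S_def c.d0_def[abs_def] fun_eq_iff)
  have uS: "?u \<in> Cc_inf S - {(\<lambda>x. 0)}" using c.uu_Cc[of k] c.uu_nonzero[of k] by (simp add: S_def)
  have out: "x \<notin> S \<Longrightarrow> c.d0 k x = 0" for x by (simp add: S_def c.d0_out)
  have e1: "(LINT x:S|lborel. norm (grad ?u x) / d x powr w) = (\<integral>x. norm (grad ?u x) / c.d0 k x powr w \<partial>lborel)" for w
    unfolding dd by (subst set_int_full) (auto simp: out)
  have e2: "(LINT x:S|lborel. \<bar>?u x\<bar> / d x powr w) = (\<integral>x. \<bar>?u x\<bar> / c.d0 k x powr w \<partial>lborel)" for w
    unfolding dd by (subst set_int_full) (auto simp: out)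
  define ID where "ID = (\<integral>x. norm (grad ?u x) / c.d0 k x powr \<alpha> \<partial>(lborel :: (real^'n) measure))"
  define I1 where "I1 = (\<integral>x. norm (grad ?u x) / c.d0 k x powr (s - 1) \<partial>(lborel :: (real^'n) measure))"
  define I2 where "I2 = (\<integral>x. \<bar>?u x\<bar> / c.d0 k x powr s \<partial>(lborel :: (real^'n) measure))"
  define Q where "Q = c.Qk k"
  have Q: "Q > 0" using c.Qk_pos by (simp add: Q_def)
  have HH: "C0 \<le> (I1 - (s - 1) * I2) / ID"
    using bspec[OF H uS] unfolding e1 e2 ID_def I1_def I2_def .
  have IDl: "(a + h) powr (- \<alpha>) * Q \<le> ID" unfolding ID_def Q_def by (rule c.D_lower) (use al in auto)
  have IDp: "ID > 0" using IDl Q a h by (smt (verit) mult_pos_pos powr_gt_zero)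
  have I1u: "I1 \<le> c.J1w (s - 1) * Q + real CARD('n) * (2 * c.Bw (s - 1) * Q / c.Mp)"
    unfolding I1_def Q_def by (rule c.I1_upper)
  have I2e: "I2 = c.Bw s * Q" unfolding I2_def Q_def by (rule c.I2_eq)
  have J1: "c.J1w (s - 1) \<le> 2 / a powr (s - 1)"
    unfolding c.J1w_def by (rule c.dpsiw_le) (use s in auto)
  have J2: "(s - 1) * c.Bw s \<ge> 2 * ((a + h) powr (1 - s) - R powr (1 - s))"
    unfolding c.Bw_def by (rule c.J2_ge[OF s])
  have cvx: "a powr (1 - s) - (a + h) powr (1 - s) \<le> (s - 1) * h * a powr (- s)"
    by (rule powr_convex_bound) (use a h s in auto)
  have ha: "h * a powr (- s) = 1" using a by (simp add: h_def powr_minus field_simps)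
  have a1: "2 / a powr (s - 1) = 2 * a powr (1 - s)" using a by (simp add: powr_diff powr_minus field_simps)
  have main1: "c.J1w (s - 1) - (s - 1) * c.Bw s \<le> 2 * (s - 1) + 2 * R powr (1 - s)"
  proof -
    have "(s - 1) * h * a powr (- s) = s - 1" using ha by (simp add: mult.assoc)
    then have cv: "a powr (1 - s) - (a + h) powr (1 - s) \<le> s - 1" using cvx by (simp only:)
    have j1: "c.J1w (s - 1) \<le> 2 * a powr (1 - s)" using J1 a1 by simp
    show ?thesis by (rule lin_aux[OF j1 J2 cv])
  qed
  have Bu: "c.Bw (s - 1) \<le> 2 * R * a powr (1 - s)" by (rule c.Bw_upper[OF s])
  have Mp: "c.Mp \<ge> 2 * L" "c.Mp > 0" using c.Mp_pos by auto
  have X: "real CARD('n) * (2 * c.Bw (s - 1) / c.Mp) < 1"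
  proof -
    have "real CARD('n) * (2 * c.Bw (s - 1) / c.Mp) \<le> real CARD('n) * (2 * (2 * R * a powr (1 - s)) / (2 * L))"
      using Bu Mp L c.Bw_nonneg[of "s - 1"] by (intro mult_left_mono frac_le) auto
    also have "\<dots> = (L - 1) / L"
    proof -
      have "real CARD('n) * (2 * R * a powr (1 - s)) \<ge> 0" using R by simp
      then show ?thesis unfolding L_def by (simp add: field_simps)
    qed
    also have "\<dots> < 1" using L by simp
    finally show ?thesis .
  qed
  have N: "I1 - (s - 1) * I2 < Q * Kc"
  proof -
    have "I1 - (s - 1) * I2 \<le> Q * (c.J1w (s - 1) - (s - 1) * c.Bw s) + Q * (real CARD('n) * (2 * c.Bw (s - 1) / c.Mp))"
      using I1u I2e by (simp add: algebra_simps)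
    also have "\<dots> < Q * (2 * (s - 1) + 2 * R powr (1 - s)) + Q * 1"
      using main1 X Q by (intro add_le_less_mono mult_left_mono mult_strict_left_mono) auto
    finally show ?thesis by (simp add: Kc_def algebra_simps)
  qed
  have ab: "(a + h) powr \<alpha> < C0 / Kc"
  proof -
    have "a + h < b" using a h b by simp
    then have "(a + h) powr \<alpha> < b powr \<alpha>" using al a h by (intro powr_less_mono2) auto
    then show ?thesis using bpow by simp
  qed
  have "Kc < C0 * (a + h) powr (- \<alpha>)"
  proof -
    have p: "(a + h) powr \<alpha> > 0" using a h by simp
    have "Kc * (a + h) powr \<alpha> < C0" using ab Kc by (simp add: field_simps)
    then show ?thesis using p by (simp add: powr_minus field_simps)
  qed
  then have "Q * Kc < C0 * ((a + h) powr (- \<alpha>) * Q)" using Q by (simp add: algebra_simps)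
  also have "\<dots> \<le> C0 * ID" using IDl C0 by simp
  finally have "I1 - (s - 1) * I2 < C0 * ID" using N by simp
  moreover have "C0 * ID \<le> I1 - (s - 1) * I2" using HH IDp by (simp add: field_simps)
  ultimately show False by simp
qed

end
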